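(* Let $(\mathcal{F}_\alpha)_{\alpha<\omega_1}$ and $(\mathcal{G}_\alpha)_{\alpha<\omega_1}$ be transfinite families defined by two approximating families. Let $\mathcal{A}\subset[\mathbb{N}]^{<\infty}$ be hereditary, $P\subset\mathbb{N}$ infinite and $\alpha<\omega_1$. Then $\mathcal{A}$ is $\alpha$-large on $P$ with respect to $(\mathcal{F}_\beta)$ if and only if $\mathcal{A}$ is $\alpha$-large on $P$ with respect to $(\mathcal{G}_\beta)$.
   Context: An approximating family assigns to each countable limit ordinal $\alpha$ finite sets $A_n(\alpha)\subset[0,\alpha)$, $n\in\mathbb{N}$, with $A_n(\alpha)\subset A_{n+1}(\alpha)$ and $\lim_n\max A_n(\alpha)=\alpha$. The associated transfinite family: $\mathcal{F}_0=\{\emptyset\}$; $\mathcal{F}_{\beta+1}=\{\{n\}\cup E:n\in\mathbb{N},E\in\mathcal{F}_\beta\}\cup\{\emptyset\}$; for limit $\alpha$, $\mathcal{F}_\alpha=\{\emptyset\}\cup\{E\ne\emptyset:E\in\bigcup_{\beta\in A_{\min E}(\alpha)}\mathcal{F}_\beta\}$. For $N=\{n_1<n_2<\dots\}$, $\mathcal{F}^N=\{\{n_i:i\in E\}:E\in\mathcal{F}\}$. $\mathcal{A}$ is $\alpha$-large on $P$ with respect to $(\mathcal{F}_\beta)$ if for every infinite $M\subset P$ there is an infinite $N\subset M$ with $\mathcal{F}_\alpha^N\subset\mathcal{A}$. $[\mathbb{N}]^{<\infty}$ = finite subsets of $\mathbb{N}$; hereditary = closed under subsets. *)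

theory Defs
  imports "HOL-Library.Countable_Set"
begin

text \<open>Countable ordinals are modelled by an arbitrary well-ordered type 'o in which
every element has only countably many predecessors (an initial segment of omega_1).
The natural numbers N are modelled by nat (starting at 0).\<close>

definition is_succ_of :: "'o::wellorder \<Rightarrow> 'o \<Rightarrow> bool" where
  "is_succ_of \<beta> \<alpha> \<longleftrightarrow> \<beta> < \<alpha> \<and> (\<forall>\<gamma>. \<beta> < \<gamma> \<longrightarrow> \<alpha> \<le> \<gamma>)"

definition is_limit :: "'o::wellorder \<Rightarrow> bool" where
  "is_limit \<alpha> \<longleftrightarrow> (\<exists>\<beta>. \<beta> < \<alpha>) \<and> \<not> (\<exists>\<beta>. is_succ_of \<beta> \<alpha>)"

definition approximating_family :: "('o::wellorder \<Rightarrow> nat \<Rightarrow> 'o set) \<Rightarrow> bool" where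
  "approximating_family A \<longleftrightarrow>
     (\<forall>\<alpha>. is_limit \<alpha> \<longrightarrow>
        (\<forall>n. finite (A \<alpha> n) \<and> A \<alpha> n \<noteq> {} \<and> A \<alpha> n \<subseteq> {..<\<alpha>} \<and> A \<alpha> n \<subseteq> A \<alpha> (Suc n)) \<and>
        (\<forall>\<beta><\<alpha>. \<exists>n0. \<forall>n\<ge>n0. \<beta> < Max (A \<alpha> n)))"

definition transfinite_family :: "('o::wellorder \<Rightarrow> nat \<Rightarrow> 'o set) \<Rightarrow> 'o \<Rightarrow> nat set set" where
  "transfinite_family A = wfrec {(x, y). x < y}
     (\<lambda>F \<alpha>. if \<not> (\<exists>\<beta>. \<beta> < \<alpha>) then {{}}
            else if (\<exists>\<beta>. is_succ_of \<beta> \<alpha>)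
              then {insert n E | n E. E \<in> F (THE \<beta>. is_succ_of \<beta> \<alpha>)} \<union> {{}}
            else {{}} \<union> {E. E \<noteq> {} \<and> E \<in> (\<Union>\<beta>\<in>A \<alpha> (Min E). F \<beta>)})"

definition spread :: "nat set \<Rightarrow> nat set set \<Rightarrow> nat set set" where
  "spread N \<F> = (\<lambda>E. enumerate N ` E) ` \<F>"

definition large :: "('o::wellorder \<Rightarrow> nat set set) \<Rightarrow> 'o \<Rightarrow> nat set \<Rightarrow> nat set set \<Rightarrow> bool" where
  "large \<F> \<alpha> P \<A> \<longleftrightarrow>
     (\<forall>M. M \<subseteq> P \<and> infinite M \<longrightarrow> (\<exists>N. N \<subseteq> M \<and> infinite N \<and> spread N (\<F> \<alpha>) \<subseteq> \<A>))"

definition hereditary :: "nat set set \<Rightarrow> bool" where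
  "hereditary \<A> \<longleftrightarrow> (\<forall>E\<in>\<A>. \<forall>E'. E' \<subseteq> E \<longrightarrow> E' \<in> \<A>)"

end

theory Submission
  imports Defs
begin

definition dominates :: "(nat \<Rightarrow> nat) \<Rightarrow> nat set set \<Rightarrow> nat set set \<Rightarrow> bool" where
  "dominates g G F \<longleftrightarrow> (\<forall>E\<in>G. finite E \<longrightarrow> (\<forall>f. (\<forall>x\<in>E. g x \<le> f x) \<longrightarrow> f ` E \<in> F))"

lemma tf_eq:
  fixes A :: "'o::wellorder \<Rightarrow> nat \<Rightarrow> 'o set"
  assumes "approximating_family A"
  shows "transfinite_family A \<alpha> = (if \<not> (\<exists>\<beta>. \<beta> < \<alpha>) then {{}}
            else if (\<exists>\<beta>. is_succ_of \<beta> \<alpha>)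
              then {insert n E | n E. E \<in> transfinite_family A (THE \<beta>. is_succ_of \<beta> \<alpha>)} \<union> {{}}
            else {{}} \<union> {E. E \<noteq> {} \<and> E \<in> (\<Union>\<beta>\<in>A \<alpha> (Min E). transfinite_family A \<beta>)})"
proof -
  have wf: "wf {(x, y). x < (y::'o)}" by (rule wf)
  have succ: "(THE \<beta>. is_succ_of \<beta> \<alpha>) < \<alpha>" if ex: "\<exists>\<beta>. is_succ_of \<beta> \<alpha>"
  proof -
    obtain b where b: "is_succ_of b \<alpha>" using ex by blast
    have "\<And>c. is_succ_of c \<alpha> \<Longrightarrow> c = b"
      using b unfolding is_succ_of_def by (meson leD linorder_neqE)
    hence "(THE \<beta>. is_succ_of \<beta> \<alpha>) = b" using b by (rule the_equality[rotated])
    thus ?thesis using b by (simp add: is_succ_of_def)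
  qed
  define R where "R = {(x, y). x < (y::'o)}"
  define W where "W = wfrec R (\<lambda>F \<alpha>. if \<not> (\<exists>\<beta>. \<beta> < \<alpha>) then {{}}
            else if (\<exists>\<beta>. is_succ_of \<beta> \<alpha>)
              then {insert n E | n E. E \<in> F (THE \<beta>. is_succ_of \<beta> \<alpha>)} \<union> {{}}
            else {{}} \<union> {E. E \<noteq> {} \<and> E \<in> (\<Union>\<beta>\<in>A \<alpha> (Min E). F \<beta>)})"
  have W: "transfinite_family A = W" unfolding W_def R_def transfinite_family_def ..
  have unf: "W \<alpha> = (if \<not> (\<exists>\<beta>. \<beta> < \<alpha>) then {{}}
            else if (\<exists>\<beta>. is_succ_of \<beta> \<alpha>)
              then {insert n E | n E. E \<in> cut W R \<alpha> (THE \<beta>. is_succ_of \<beta> \<alpha>)} \<union> {{}}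
            else {{}} \<union> {E. E \<noteq> {} \<and> E \<in> (\<Union>\<beta>\<in>A \<alpha> (Min E). cut W R \<alpha> \<beta>)})"
    unfolding W_def by (subst wfrec[OF wf[folded R_def]]) (rule refl)
  show ?thesis
  proof (cases "\<exists>\<beta>. \<beta> < \<alpha>")
    case False then show ?thesis using unf W by simp
  next
    case True
    show ?thesis
    proof (cases "\<exists>\<beta>. is_succ_of \<beta> \<alpha>")
      case s: True
      have "cut W R \<alpha> (THE \<beta>. is_succ_of \<beta> \<alpha>) = W (THE \<beta>. is_succ_of \<beta> \<alpha>)"
        using succ[OF s] by (simp add: cut_apply R_def)
      then show ?thesis using unf W True s by simp
    next
      case s: False
      have lim: "A \<alpha> n \<subseteq> {..<\<alpha>}" for n
        using assms True s unfolding approximating_family_def is_limit_def by blast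
      have c: "cut W R \<alpha> b = W b" if "b \<in> A \<alpha> m" for b m
      proof -
        have "b < \<alpha>" using lim that by blast
        thus ?thesis by (simp add: cut_apply R_def)
      qed
      have "(\<Union>\<beta>\<in>A \<alpha> m. cut W R \<alpha> \<beta>) = (\<Union>\<beta>\<in>A \<alpha> m. W \<beta>)" for m
        using c by (intro SUP_cong refl) blast
      then show ?thesis using unf W True s by simp
    qed
  qed
qed

lemma tf_zero:
  assumes "approximating_family A" "\<not> (\<exists>\<beta>. \<beta> < \<alpha>)"
  shows "transfinite_family A \<alpha> = {{}}"
  using tf_eq[OF assms(1), of \<alpha>] assms(2) by simp

lemma tf_succ:
  assumes "approximating_family A" "is_succ_of \<beta> \<alpha>"
  shows "transfinite_family A \<alpha> = {insert n E | n E. E \<in> transfinite_family A \<beta>} \<union> {{}}"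
proof -
  have "\<And>c. is_succ_of c \<alpha> \<Longrightarrow> c = \<beta>"
    using assms(2) unfolding is_succ_of_def by (meson leD linorder_neqE)
  hence t: "(THE \<beta>. is_succ_of \<beta> \<alpha>) = \<beta>" using assms(2) by (rule the_equality[rotated])
  have "\<beta> < \<alpha>" using assms(2) by (simp add: is_succ_of_def)
  thus ?thesis using tf_eq[OF assms(1), of \<alpha>] assms(2) t by auto
qed

lemma tf_lim:
  assumes "approximating_family A" "is_limit \<alpha>"
  shows "transfinite_family A \<alpha> = {{}} \<union> {E. E \<noteq> {} \<and> (\<exists>\<beta>\<in>A \<alpha> (Min E). E \<in> transfinite_family A \<beta>)}"
  using tf_eq[OF assms(1), of \<alpha>] assms(2) unfolding is_limit_def by auto

lemma tf_empty:
  assumes "approximating_family A"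
  shows "{} \<in> transfinite_family A \<alpha>"
  using tf_eq[OF assms, of \<alpha>] by auto

lemma approx_mono:
  assumes "approximating_family A" "is_limit \<alpha>" "n \<le> m"
  shows "A \<alpha> n \<subseteq> A \<alpha> m"
proof -
  have "\<And>k. A \<alpha> k \<subseteq> A \<alpha> (Suc k)" using assms(1,2) unfolding approximating_family_def by blast
  thus ?thesis using lift_Suc_mono_le[of "A \<alpha>"] assms(3) by blast
qed

lemma approx_props:
  assumes "approximating_family A" "is_limit \<alpha>"
  shows "finite (A \<alpha> n)" "A \<alpha> n \<noteq> {}" "A \<alpha> n \<subseteq> {..<\<alpha>}"
    "\<beta> < \<alpha> \<Longrightarrow> \<exists>n0. \<forall>n\<ge>n0. \<beta> < Max (A \<alpha> n)"
  using assms unfolding approximating_family_def by blast+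

lemma trichotomy:
  fixes \<alpha> :: "'o::wellorder"
  shows "\<not> (\<exists>\<beta>. \<beta> < \<alpha>) \<or> (\<exists>\<beta>. is_succ_of \<beta> \<alpha>) \<or> is_limit \<alpha>"
  unfolding is_limit_def by blast

lemma tf_finite:
  assumes "approximating_family A"
  shows "\<forall>E\<in>transfinite_family A \<alpha>. finite E"
proof (induction \<alpha> rule: less_induct)
  case (less \<alpha>)
  consider "\<not> (\<exists>\<beta>. \<beta> < \<alpha>)" | \<beta> where "is_succ_of \<beta> \<alpha>" | "is_limit \<alpha>"
    using trichotomy by blast
  then show ?case
  proof cases
    case 1 then show ?thesis using tf_zero[OF assms] by simp
  next
    case (2 \<beta>)
    hence "\<beta> < \<alpha>" by (simp add: is_succ_of_def)
    then show ?thesis using tf_succ[OF assms 2] less by auto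
  next
    case 3
    show ?thesis
    proof
      fix E assume "E \<in> transfinite_family A \<alpha>"
      then consider "E = {}" | \<beta> where "\<beta> \<in> A \<alpha> (Min E)" "E \<in> transfinite_family A \<beta>"
        using tf_lim[OF assms 3] by auto
      then show "finite E"
      proof cases
        case (2 \<beta>)
        hence "\<beta> < \<alpha>" using approx_props(3)[OF assms 3] by blast
        then show ?thesis using less 2 by blast
      qed simp
    qed
  qed
qed

lemma succ_sub:
  assumes "approximating_family A" "is_succ_of \<beta> \<alpha>"
  shows "transfinite_family A \<beta> \<subseteq> transfinite_family A \<alpha>"
proof
  fix S assume S: "S \<in> transfinite_family A \<beta>"
  show "S \<in> transfinite_family A \<alpha>"
  proof (cases "S = {}")
    case False
    then obtain n where "n \<in> S" by blast
    hence "S = insert n S" by blast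
    thus ?thesis using S tf_succ[OF assms] by blast
  qed (simp add: tf_empty[OF assms(1)])
qed

lemma main:
  fixes A B :: "'o::wellorder \<Rightarrow> nat \<Rightarrow> 'o set"
  assumes aA: "approximating_family A" and aB: "approximating_family B"
  shows "\<beta> \<le> \<gamma> \<Longrightarrow> \<exists>g. dominates g (transfinite_family B \<beta>) (transfinite_family A \<gamma>)"
proof (induction \<gamma> arbitrary: \<beta> rule: less_induct)
  case (less \<gamma>)
  consider "\<not> (\<exists>\<beta>. \<beta> < \<gamma>)" | \<gamma>' where "is_succ_of \<gamma>' \<gamma>" | "is_limit \<gamma>"
    using trichotomy by blast
  then show ?case
  proof cases
    case 1
    hence "\<beta> = \<gamma>" using less.prems by (simp add: order.order_iff_strict)
    hence "transfinite_family B \<beta> = {{}}" using tf_zero[OF aB] 1 by simp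
    thus ?thesis using tf_empty[OF aA] unfolding dominates_def by auto
  next
    case (2 \<gamma>')
    have lt: "\<gamma>' < \<gamma>" using 2 by (simp add: is_succ_of_def)
    have "\<beta> \<le> \<gamma>' \<or> \<beta> = \<gamma>"
      using 2 less.prems unfolding is_succ_of_def by (metis antisym not_le)
    then show ?thesis
    proof
      assume "\<beta> \<le> \<gamma>'"
      then obtain g where "dominates g (transfinite_family B \<beta>) (transfinite_family A \<gamma>')"
        using less.IH[OF lt] by blast
      thus ?thesis using succ_sub[OF aA 2] unfolding dominates_def by blast
    next
      assume eq: "\<beta> = \<gamma>"
      obtain g where g: "dominates g (transfinite_family B \<gamma>') (transfinite_family A \<gamma>')"
        using less.IH[OF lt, of \<gamma>'] by blast
      have "dominates g (transfinite_family B \<beta>) (transfinite_family A \<gamma>)"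
        unfolding dominates_def
      proof (intro ballI impI allI)
        fix E f assume E: "E \<in> transfinite_family B \<beta>" and fin: "finite E"
          and f: "\<forall>x\<in>E. g x \<le> f x"
        from E consider "E = {}" | n E' where "E = insert n E'" "E' \<in> transfinite_family B \<gamma>'"
          using tf_succ[OF aB, of \<gamma>' \<beta>] 2 eq by auto
        then show "f ` E \<in> transfinite_family A \<gamma>"
        proof cases
          case 1 then show ?thesis using tf_empty[OF aA] by simp
        next
          case (2 n E')
          have "f ` E' \<in> transfinite_family A \<gamma>'"
            using g 2 fin f unfolding dominates_def by auto
          moreover have "f ` E = insert (f n) (f ` E')" using 2 by simp
          ultimately show ?thesis using tf_succ[OF aA \<open>is_succ_of \<gamma>' \<gamma>\<close>] by blast
        qed
      qed
      thus ?thesis by blast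
    qed
  next
    case 3
    have L1: "\<exists>g. dominates g (transfinite_family B \<delta>) (transfinite_family A \<gamma>)" if dlt: "\<delta> < \<gamma>" for \<delta>
    proof -
      obtain n0 where n0: "\<forall>n\<ge>n0. \<delta> < Max (A \<gamma> n)" using approx_props(4)[OF aA 3 dlt] by blast
      define \<epsilon> where "\<epsilon> = Max (A \<gamma> n0)"
      have \<epsilon>in: "\<epsilon> \<in> A \<gamma> n0" unfolding \<epsilon>_def using approx_props(1,2)[OF aA 3] by simp
      hence \<epsilon>lt: "\<epsilon> < \<gamma>" using approx_props(3)[OF aA 3] by blast
      have "\<delta> \<le> \<epsilon>" using n0 \<epsilon>_def less_imp_le order_refl by blast
      then obtain g1 where g1: "dominates g1 (transfinite_family B \<delta>) (transfinite_family A \<epsilon>)"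
        using less.IH[OF \<epsilon>lt] by blast
      have "dominates (\<lambda>x. max n0 (g1 x)) (transfinite_family B \<delta>) (transfinite_family A \<gamma>)"
        unfolding dominates_def
      proof (intro ballI impI allI)
        fix E f assume E: "E \<in> transfinite_family B \<delta>" and fin: "finite E"
          and f: "\<forall>x\<in>E. max n0 (g1 x) \<le> f x"
        have inE: "f ` E \<in> transfinite_family A \<epsilon>" using g1 E fin f unfolding dominates_def by auto
        show "f ` E \<in> transfinite_family A \<gamma>"
        proof (cases "E = {}")
          case True then show ?thesis using tf_empty[OF aA] by simp
        next
          case False
          have "Min (f ` E) \<in> f ` E" using False fin by simp
          hence "n0 \<le> Min (f ` E)" using f by auto
          hence "\<epsilon> \<in> A \<gamma> (Min (f ` E))" using approx_mono[OF aA 3] \<epsilon>in by blast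
          thus ?thesis using tf_lim[OF aA 3] inE False by auto
        qed
      qed
      thus ?thesis by blast
    qed
    show ?thesis
    proof (cases "\<beta> < \<gamma>")
      case True then show ?thesis using L1 by blast
    next
      case False
      hence eq: "\<beta> = \<gamma>" using less.prems by simp
      obtain gd where gd: "\<And>\<delta>. \<delta> < \<gamma> \<Longrightarrow> dominates (gd \<delta>) (transfinite_family B \<delta>) (transfinite_family A \<gamma>)"
        using L1 by metis
      define g where "g x = Max ((\<lambda>\<delta>. gd \<delta> x) ` B \<gamma> x)" for x
      have "dominates g (transfinite_family B \<beta>) (transfinite_family A \<gamma>)"
        unfolding dominates_def
      proof (intro ballI impI allI)
        fix E f assume E: "E \<in> transfinite_family B \<beta>" and fin: "finite E"
          and f: "\<forall>x\<in>E. g x \<le> f x"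
        show "f ` E \<in> transfinite_family A \<gamma>"
        proof (cases "E = {}")
          case True then show ?thesis using tf_empty[OF aA] by simp
        next
          case False
          then obtain \<delta> where \<delta>: "\<delta> \<in> B \<gamma> (Min E)" "E \<in> transfinite_family B \<delta>"
            using E eq tf_lim[OF aB 3] by auto
          have dl: "\<delta> < \<gamma>" using \<delta>(1) approx_props(3)[OF aB 3] by blast
          have "gd \<delta> x \<le> f x" if "x \<in> E" for x
          proof -
            have "Min E \<le> x" using that fin by simp
            hence "\<delta> \<in> B \<gamma> x" using approx_mono[OF aB 3] \<delta>(1) by blast
            hence "gd \<delta> x \<le> g x" unfolding g_def using approx_props(1)[OF aB 3] by simp
            thus ?thesis using f that by (meson le_trans)
          qed
          thus ?thesis using gd[OF dl] \<delta>(2) fin unfolding dominates_def by blast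
        qed
      qed
      thus ?thesis by blast
    qed
  qed
qed

lemma enumerate_range:
  fixes k :: "nat \<Rightarrow> nat"
  assumes "strict_mono k"
  shows "enumerate (range k) n = k n"
proof (induction n)
  case 0
  show ?case unfolding enumerate_0
    by (rule Least_equality) (auto simp: strict_mono_less_eq[OF assms])
next
  case (Suc n)
  have inf: "infinite (range k)"
    using assms strict_mono_imp_inj_on finite_imageD by blast
  show ?case unfolding enumerate_Suc''[OF inf] Suc
  proof (rule Least_equality)
    show "k (Suc n) \<in> range k \<and> k n < k (Suc n)" using assms by (simp add: strict_mono_def)
  next
    fix y assume "y \<in> range k \<and> k n < y"
    then obtain i where "y = k i" "k n < k i" by blast
    hence "n < i" using strict_mono_less[OF assms] by blast
    thus "k (Suc n) \<le> y" using \<open>y = k i\<close> strict_mono_less_eq[OF assms] by simp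
  qed
qed

lemma large_transfer:
  fixes A B :: "'o::wellorder \<Rightarrow> nat \<Rightarrow> 'o set"
  assumes aA: "approximating_family A" and aB: "approximating_family B"
    and L: "large (transfinite_family A) \<alpha> P \<A>"
  shows "large (transfinite_family B) \<alpha> P \<A>"
  unfolding large_def
proof (intro allI impI)
  fix M assume M: "M \<subseteq> P \<and> infinite M"
  then obtain N where N: "N \<subseteq> M" "infinite N" "spread N (transfinite_family A \<alpha>) \<subseteq> \<A>"
    using L unfolding large_def by (metis (no_types, lifting))
  obtain g where g: "dominates g (transfinite_family B \<alpha>) (transfinite_family A \<alpha>)"
    using main[OF aA aB, of \<alpha> \<alpha>] by blast
  define h where "h n = (\<Sum>i\<le>n. g i) + n" for n
  have hsm: "strict_mono h" unfolding strict_mono_Suc_iff h_def by simp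
  have gh: "g x \<le> h x" for x
  proof -
    have "g x \<le> (\<Sum>i\<le>x. g i)" by (rule member_le_sum) auto
    thus ?thesis unfolding h_def by simp
  qed
  define k where "k = enumerate N \<circ> h"
  have ksm: "strict_mono k" unfolding k_def
    using hsm strict_mono_enumerate[OF N(2)] by (simp add: strict_mono_def)
  define J where "J = range k"
  have "J \<subseteq> M" unfolding J_def k_def using N(1) enumerate_in_set[OF N(2)] by auto
  moreover have "infinite J" unfolding J_def
    using ksm strict_mono_imp_inj_on finite_imageD by blast
  moreover have "spread J (transfinite_family B \<alpha>) \<subseteq> \<A>"
  proof
    fix S assume "S \<in> spread J (transfinite_family B \<alpha>)"
    then obtain E where E: "E \<in> transfinite_family B \<alpha>" "S = enumerate J ` E"
      unfolding spread_def by blast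
    have eJ: "enumerate J = k" by (rule ext) (simp add: J_def enumerate_range[OF ksm])
    have "finite E" using tf_finite[OF aB] E(1) by blast
    have gd: "\<And>f. (\<forall>x\<in>E. g x \<le> f x) \<Longrightarrow> f ` E \<in> transfinite_family A \<alpha>"
      using g E(1) \<open>finite E\<close> unfolding dominates_def by blast
    have hE: "h ` E \<in> transfinite_family A \<alpha>" by (rule gd) (simp add: gh)
    have "S = enumerate N ` (h ` E)" using E(2) eJ unfolding k_def by (simp add: image_comp)
    hence "S \<in> spread N (transfinite_family A \<alpha>)" unfolding spread_def
      by (rule image_eqI[OF _ hE])
    thus "S \<in> \<A>" using N(3) by blast
  qed
  ultimately show "\<exists>N. N \<subseteq> M \<and> infinite N \<and> spread N (transfinite_family B \<alpha>) \<subseteq> \<A>" by blast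
qed

theorem corollary4p3:
  fixes A B :: "'o::wellorder \<Rightarrow> nat \<Rightarrow> 'o set"
    and \<A> :: "nat set set" and P :: "nat set" and \<alpha> :: 'o
  assumes countable_ordinals: "\<forall>a::'o. countable {b. b < a}"
    and "approximating_family A" and "approximating_family B"
    and "\<forall>E\<in>\<A>. finite E" and "hereditary \<A>"
    and "infinite P"
  shows "large (transfinite_family A) \<alpha> P \<A> \<longleftrightarrow> large (transfinite_family B) \<alpha> P \<A>"
  using large_transfer[OF assms(2,3)] large_transfer[OF assms(3,2)] by blast

end
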